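(* Let $0\le\gamma\le1$ and $d\ge1$ with $\mathsf{err}(\gamma,d)>0$, and let $f\colon\{0,1\}^m\to\{0,1\}^n$ be a $d$-local function. Then there exist a set $S\subseteq[m]$ and a number $r$ with $$|S|\le\frac{\mathsf{err}(\gamma,d)^2\cdot r}{4}\quad\text{and}\quad r\ge n\cdot\left(\frac{\mathsf{err}(\gamma,d)^2}{16d}\right)^{2d+1}$$ such that for every fixing $\rho\in\{0,1\}^S$ of the input bits in $S$, the restricted function $f_\rho\colon\{0,1\}^{[m]\setminus S}\to\{0,1\}^n$ is $(d,r)$-local.
   Context: A function $f\colon\{0,1\}^m\to\{0,1\}^n$ is $d$-local if each output bit depends on at most $d$ input bits; $I_f(i)$ denotes the set of input coordinates on which output bit $i$ depends. Fixing the inputs in $S$ to $\rho$ yields $f_\rho(z')=f(\rho,z')$ for $z'\in\{0,1\}^{[m]\setminus S}$. Output bits $i_1,\dots,i_r$ of a function $g$ are non-connected if the sets $I_g(i_1),\dots,I_g(i_r)$ are pairwise disjoint. $g$ is $(d,r)$-local if it is $d$-local and has $r$ non-connected output bits. $\mathsf{err}(\gamma,t)$ is the minimum distance of $\gamma$ to an integer multiple of $2^{-t}$. *)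

theory Defs
  imports Complex_Main
begin

text \<open>Boolean vectors indexed by a finite coordinate set D are functions
  nat => bool that are False outside D. A function from {0,1}^D to {0,1}^n
  is a map g :: (nat => bool) => (nat => bool); only inputs in cube D and
  outputs with index < n matter.\<close>

definition cube :: "nat set \<Rightarrow> (nat \<Rightarrow> bool) set" where
  "cube D = {x. \<forall>j. j \<notin> D \<longrightarrow> x j = False}"

definition depset :: "nat set \<Rightarrow> ((nat \<Rightarrow> bool) \<Rightarrow> nat \<Rightarrow> bool) \<Rightarrow> nat \<Rightarrow> nat set" where
  "depset D g i = {j \<in> D. \<exists>x \<in> cube D. g x i \<noteq> g (x(j := \<not> x j)) i}"

definition is_local :: "nat set \<Rightarrow> nat \<Rightarrow> ((nat \<Rightarrow> bool) \<Rightarrow> nat \<Rightarrow> bool) \<Rightarrow> nat \<Rightarrow> bool" where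
  "is_local D n g d \<longleftrightarrow> (\<forall>i<n. card (depset D g i) \<le> d)"

definition non_connected :: "nat set \<Rightarrow> ((nat \<Rightarrow> bool) \<Rightarrow> nat \<Rightarrow> bool) \<Rightarrow> nat set \<Rightarrow> bool" where
  "non_connected D g I \<longleftrightarrow> pairwise (\<lambda>i k. depset D g i \<inter> depset D g k = {}) I"

definition dr_local :: "nat set \<Rightarrow> nat \<Rightarrow> ((nat \<Rightarrow> bool) \<Rightarrow> nat \<Rightarrow> bool) \<Rightarrow> nat \<Rightarrow> nat \<Rightarrow> bool" where
  "dr_local D n g d r \<longleftrightarrow> is_local D n g d \<and>
     (\<exists>I \<subseteq> {..<n}. card I = r \<and> non_connected D g I)"

definition restrict_fn :: "((nat \<Rightarrow> bool) \<Rightarrow> nat \<Rightarrow> bool) \<Rightarrow> nat set \<Rightarrow> (nat \<Rightarrow> bool) \<Rightarrow> (nat \<Rightarrow> bool) \<Rightarrow> nat \<Rightarrow> bool" where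
  "restrict_fn f S \<rho> = (\<lambda>z. f (\<lambda>j. if j \<in> S then \<rho> j else z j))"

definition err :: "real \<Rightarrow> nat \<Rightarrow> real" where
  "err \<gamma> t = (INF k::int. \<bar>\<gamma> - real_of_int k / 2 ^ t\<bar>)"

end

theory Submission
  imports Defs
begin

lemma max_matching:
  fixes E :: "nat \<Rightarrow> nat set" and N :: "nat set"
  assumes "finite N"
  shows "\<exists>M\<subseteq>N. pairwise (\<lambda>i k. E i \<inter> E k = {}) M \<and>
     (\<forall>i\<in>N. E i \<noteq> {} \<longrightarrow> E i \<inter> (\<Union>k\<in>M. E k) \<noteq> {})"
proof -
  let ?F = "{M. M \<subseteq> N \<and> pairwise (\<lambda>i k. E i \<inter> E k = {}) M}"
  have fin: "finite ?F" using assms by (simp add: finite_subset)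
  have ne: "{} \<in> ?F" by simp
  obtain M where M: "M \<in> ?F" and mx: "\<forall>M'\<in>?F. card M' \<le> card M"
  proof -
    have "Max (card ` ?F) \<in> card ` ?F" using fin ne by (intro Max_in) auto
    then obtain M where "M \<in> ?F" "card M = Max (card ` ?F)" by auto
    moreover have "\<forall>M'\<in>?F. card M' \<le> Max (card ` ?F)" using fin by auto
    ultimately show ?thesis using that by auto
  qed
  show ?thesis
  proof (intro exI[of _ M] conjI)
    show "M \<subseteq> N" "pairwise (\<lambda>i k. E i \<inter> E k = {}) M" using M by auto
    show "\<forall>i\<in>N. E i \<noteq> {} \<longrightarrow> E i \<inter> (\<Union>k\<in>M. E k) \<noteq> {}"
    proof (intro ballI impI)
      fix i assume iN: "i \<in> N" and ne: "E i \<noteq> {}"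
      show "E i \<inter> (\<Union>k\<in>M. E k) \<noteq> {}"
      proof (cases "i \<in> M")
        case True then show ?thesis using ne by blast
      next
        case False
        show ?thesis
        proof
          assume dis: "E i \<inter> (\<Union>k\<in>M. E k) = {}"
          have "insert i M \<in> ?F" using M iN dis by (auto simp: pairwise_insert)
          hence "card (insert i M) \<le> card M" using mx by blast
          moreover have "finite M" using M assms finite_subset by blast
          ultimately show False using False by simp
        qed
      qed
    qed
  qed
qed

lemma comb:
  fixes E :: "nat \<Rightarrow> nat set" and N :: "nat set" and c q :: real and j :: nat
  assumes "finite N" "\<forall>i\<in>N. finite (E i) \<and> card (E i) \<le> j" "0 < q" "q \<le> 1" "real j * q \<le> c"
  shows "\<exists>S I. finite S \<and> S \<subseteq> (\<Union>i\<in>N. E i) \<and> I \<subseteq> N \<and>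
     pairwise (\<lambda>i k. (E i - S) \<inter> (E k - S) = {}) I \<and>
     real (card S) \<le> c * real j * real (card I) \<and> real (card N) * q ^ j \<le> real (card I)"
  using assms(2,5)
proof (induction j arbitrary: E)
  case 0
  hence "\<forall>i\<in>N. E i = {}" by auto
  hence pw: "pairwise (\<lambda>i k. (E i - {}) \<inter> (E k - {}) = {}) N" by (simp add: pairwise_def)
  show ?case by (rule exI[of _ "{}"], rule exI[of _ N], use pw assms(1) in auto)
next
  case (Suc j)
  obtain M where MN: "M \<subseteq> N" and Mp: "pairwise (\<lambda>i k. E i \<inter> E k = {}) M"
    and Mcov: "\<forall>i\<in>N. E i \<noteq> {} \<longrightarrow> E i \<inter> (\<Union>k\<in>M. E k) \<noteq> {}"
    using max_matching[where E=E and N=N, OF assms(1)] by blast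
  have c0: "0 \<le> c" using Suc.prems(2) assms(3)
    by (metis mult_nonneg_nonneg of_nat_0_le_iff order.trans less_imp_le)
  have finM: "finite M" using MN assms(1) by (rule finite_subset)
  show ?case
  proof (cases "real (card N) * q ^ Suc j \<le> real (card M)")
    case True
    have pw: "pairwise (\<lambda>i k. (E i - {}) \<inter> (E k - {}) = {}) M" using Mp by simp
    show ?thesis by (rule exI[of _ "{}"], rule exI[of _ M], use pw True MN c0 in auto)
  next
    case False
    define U where "U = (\<Union>k\<in>M. E k)"
    define E' where "E' = (\<lambda>i. E i - U)"
    have cardU: "card U \<le> Suc j * card M"
    proof -
      have "card U \<le> (\<Sum>k\<in>M. card (E k))" unfolding U_def by (rule card_UN_le[OF finM])
      also have "\<dots> \<le> (\<Sum>k\<in>M. Suc j)" using Suc.prems(1) MN by (intro sum_mono) auto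
      finally show ?thesis by (simp add: mult.commute)
    qed
    have finU: "finite U" unfolding U_def using finM Suc.prems(1) MN by auto
    have E'b: "\<forall>i\<in>N. finite (E' i) \<and> card (E' i) \<le> j"
    proof
      fix i assume iN: "i \<in> N"
      have fi: "finite (E i)" "card (E i) \<le> Suc j" using Suc.prems(1) iN by auto
      show "finite (E' i) \<and> card (E' i) \<le> j"
      proof (cases "E i = {}")
        case True then show ?thesis unfolding E'_def by simp
      next
        case False
        hence "E i \<inter> U \<noteq> {}" using Mcov iN unfolding U_def by blast
        hence "card (E i \<inter> U) \<ge> 1" using fi by (simp add: Suc_leI card_gt_0_iff)
        moreover have "card (E i - U) = card (E i) - card (E i \<inter> U)"
          using fi by (simp add: card_Diff_subset_Int)
        ultimately show ?thesis using fi unfolding E'_def by simp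
      qed
    qed
    have "real j * q \<le> real (Suc j) * q" using assms(3) by (intro mult_right_mono) auto
    hence jq: "real j * q \<le> c" using Suc.prems(2) by linarith
    obtain S I where fS: "finite S" and SU: "S \<subseteq> (\<Union>i\<in>N. E' i)" and IN: "I \<subseteq> N"
      and Ip: "pairwise (\<lambda>i k. (E' i - S) \<inter> (E' k - S) = {}) I"
      and cS: "real (card S) \<le> c * real j * real (card I)"
      and cI: "real (card N) * q ^ j \<le> real (card I)"
      using Suc.IH[OF E'b jq] by (elim exE conjE) (rule that; assumption)
    have eq: "\<And>i. E' i - S = E i - (U \<union> S)" unfolding E'_def by blast
    have cu: "real (card (U \<union> S)) \<le> real (card U) + real (card S)"
      using card_Un_le[of U S] by linarith
    have "real (card U) \<le> real (Suc j * card M)"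
      using cardU by (simp only: of_nat_le_iff)
    also have "\<dots> = real (Suc j) * real (card M)" by (simp only: of_nat_mult)
    also have "real (Suc j) * real (card M) \<le> real (Suc j) * (real (card N) * q ^ Suc j)"
      using False by (intro mult_left_mono) auto
    also have "\<dots> = (real (Suc j) * q) * (real (card N) * q ^ j)" by (simp add: algebra_simps)
    also have "\<dots> \<le> c * real (card I)" using cI Suc.prems(2) assms(3) c0
      by (intro mult_mono) auto
    finally have cU: "real (card U) \<le> c * real (card I)" .
    have "c * real (Suc j) * real (card I) = c * real (card I) + c * real j * real (card I)"
      by (simp add: algebra_simps)
    hence "real (card (U \<union> S)) \<le> c * real (Suc j) * real (card I)"
      using cu cU cS by linarith
    moreover have "real (card N) * q ^ Suc j \<le> real (card I)"
    proof -
      have "real (card N) * q ^ Suc j = (real (card N) * q ^ j) * q" by simp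
      also have "\<dots> \<le> real (card N) * q ^ j" using assms(3,4) by (intro mult_left_le) auto
      finally show ?thesis using cI by linarith
    qed
    moreover have "U \<union> S \<subseteq> (\<Union>i\<in>N. E i)" using SU MN unfolding U_def E'_def by blast
    moreover have "pairwise (\<lambda>i k. (E i - (U \<union> S)) \<inter> (E k - (U \<union> S)) = {}) I"
      using Ip by (simp add: eq)
    ultimately have "finite (U \<union> S) \<and> U \<union> S \<subseteq> (\<Union>i\<in>N. E i) \<and> I \<subseteq> N \<and>
     pairwise (\<lambda>i k. (E i - (U \<union> S)) \<inter> (E k - (U \<union> S)) = {}) I \<and>
     real (card (U \<union> S)) \<le> c * real (Suc j) * real (card I) \<and> real (card N) * q ^ Suc j \<le> real (card I)"
      using fS finU IN by auto
    thus ?thesis by blast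
  qed
qed


lemma depset_sub: "depset D g i \<subseteq> D" unfolding depset_def by auto

lemma depset_restrict:
  assumes "S \<subseteq> D" "\<rho> \<in> cube S"
  shows "depset (D - S) (restrict_fn f S \<rho>) i \<subseteq> depset D f i - S"
proof
  fix j assume "j \<in> depset (D - S) (restrict_fn f S \<rho>) i"
  then have jD: "j \<in> D - S" and "\<exists>x\<in>cube (D - S). restrict_fn f S \<rho> x i \<noteq> restrict_fn f S \<rho> (x(j := \<not> x j)) i"
    unfolding depset_def by auto
  then obtain x where x: "x \<in> cube (D - S)" and ne: "restrict_fn f S \<rho> x i \<noteq> restrict_fn f S \<rho> (x(j := \<not> x j)) i"
    by blast
  define y where "y = (\<lambda>k. if k \<in> S then \<rho> k else x k)"
  have yc: "y \<in> cube D" using x assms(1) unfolding y_def cube_def by auto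
  have "(\<lambda>k. if k \<in> S then \<rho> k else (x(j := \<not> x j)) k) = y(j := \<not> y j)"
    using jD unfolding y_def by (auto simp: fun_eq_iff)
  hence "f y i \<noteq> f (y(j := \<not> y j)) i" using ne unfolding restrict_fn_def y_def by simp
  thus "j \<in> depset D f i - S" using jD yc unfolding depset_def by auto
qed

lemma err_le: "err \<gamma> t \<le> \<bar>\<gamma>\<bar>"
proof -
  have "bdd_below ((\<lambda>k::int. \<bar>\<gamma> - real_of_int k / 2 ^ t\<bar>) ` UNIV)"
    by (rule bdd_belowI[of _ 0]) auto
  hence "err \<gamma> t \<le> \<bar>\<gamma> - real_of_int 0 / 2 ^ t\<bar>" unfolding err_def by (rule cINF_lower) simp
  thus ?thesis by simp
qed

lemma pow_ineq:
  fixes a :: real and d :: nat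
  assumes "0 < a" "a \<le> 1" "d \<ge> 1"
  shows "(a / (16 * real d)) ^ (2 * d + 1) \<le> (a / (4 * real d ^ 2)) ^ d"
proof -
  let ?x = "a / (16 * real d)"
  have x0: "0 \<le> ?x" using assms by simp
  have dge: "real d \<ge> 1" using assms by simp
  have x1: "?x \<le> 1" using assms dge by (simp add: divide_le_eq)
  have "?x ^ (2 * d + 1) \<le> ?x ^ (2 * d)" by (rule power_decreasing) (use x0 x1 in auto)
  also have "\<dots> = (?x ^ 2) ^ d" by (simp add: power_mult)
  also have "\<dots> \<le> (a / (4 * real d ^ 2)) ^ d"
  proof (rule power_mono)
    have "?x ^ 2 = a * a / (256 * real d ^ 2)" by (simp add: power2_eq_square)
    also have "\<dots> \<le> a / (4 * real d ^ 2)"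
    proof -
      have "a * a \<le> a * 64" using assms by (intro mult_left_mono) auto
      hence "a * a / (256 * real d ^ 2) \<le> a * 64 / (256 * real d ^ 2)"
        using dge by (intro divide_right_mono) auto
      also have "\<dots> = a / (4 * real d ^ 2)" by simp
      finally show ?thesis .
    qed
    finally show "?x ^ 2 \<le> a / (4 * real d ^ 2)" .
    show "0 \<le> ?x ^ 2" by simp
  qed
  finally show ?thesis .
qed

theorem mainTheorem4:
  fixes \<gamma> :: real and d m n :: nat
    and f :: "(nat \<Rightarrow> bool) \<Rightarrow> nat \<Rightarrow> bool"
  assumes "0 \<le> \<gamma>" and "\<gamma> \<le> 1" and "d \<ge> 1"
    and "err \<gamma> d > 0"
    and "is_local {..<m} n f d"
  shows "\<exists>S r. S \<subseteq> {..<m} \<and>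
           real (card S) \<le> (err \<gamma> d)\<^sup>2 * real r / 4 \<and>
           real r \<ge> real n * ((err \<gamma> d)\<^sup>2 / (16 * real d)) ^ (2 * d + 1) \<and>
           (\<forall>\<rho> \<in> cube S. dr_local ({..<m} - S) n (restrict_fn f S \<rho>) d r)"
proof -
  define a where "a = (err \<gamma> d)\<^sup>2"
  have e1: "err \<gamma> d \<le> 1" using err_le[of \<gamma> d] assms(1,2) by simp
  have a0: "0 < a" using assms(4) unfolding a_def by simp
  have a1: "a \<le> 1" unfolding a_def using e1 assms(4) by (simp add: power_le_one)
  have dge: "real d \<ge> 1" using assms(3) by simp
  define c where "c = a / (4 * real d)"
  define q where "q = a / (4 * real d ^ 2)"
  have q0: "0 < q" unfolding q_def using a0 dge by simp
  have q1: "q \<le> 1"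
  proof -
    have "real d ^ 2 \<ge> 1" using one_le_power[OF dge] by blast
    hence "4 * real d ^ 2 \<ge> 1" by linarith
    thus ?thesis unfolding q_def using a1 a0 by (simp add: divide_le_eq)
  qed
  have dqc: "real d * q \<le> c" unfolding q_def c_def using dge by (simp add: power2_eq_square)
  let ?E = "depset {..<m} f"
  have Eb: "\<forall>i\<in>{..<n}. finite (?E i) \<and> card (?E i) \<le> d"
  proof
    fix i assume "i \<in> {..<n}"
    thus "finite (?E i) \<and> card (?E i) \<le> d"
      using assms(5) finite_subset[OF depset_sub[of "{..<m}" f i] finite_lessThan]
      unfolding is_local_def by simp
  qed
  obtain S I where fS: "finite S" and SU: "S \<subseteq> (\<Union>i\<in>{..<n}. ?E i)" and IN: "I \<subseteq> {..<n}"
      and Ip: "pairwise (\<lambda>i k. (?E i - S) \<inter> (?E k - S) = {}) I"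
      and cS: "real (card S) \<le> c * real d * real (card I)"
      and cI: "real (card {..<n}) * q ^ d \<le> real (card I)"
    using comb[OF finite_lessThan Eb q0 q1 dqc] by (elim exE conjE) (rule that; assumption)
  have Sm: "S \<subseteq> {..<m}" using SU depset_sub[of "{..<m}" f] by blast
  have "c * real d = a / 4" unfolding c_def using dge by simp
  hence "c * real d * real (card I) = a * real (card I) / 4" by simp
  hence cS': "real (card S) \<le> a * real (card I) / 4" using cS by linarith
  have "real n * (a / (16 * real d)) ^ (2 * d + 1) \<le> real n * q ^ d"
    unfolding q_def using pow_ineq[OF a0 a1 assms(3)] by (intro mult_left_mono) auto
  hence cI': "real n * (a / (16 * real d)) ^ (2 * d + 1) \<le> real (card I)" using cI by simp
  have dr: "\<forall>\<rho>\<in>cube S. dr_local ({..<m} - S) n (restrict_fn f S \<rho>) d (card I)"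
  proof
    fix \<rho> assume r: "\<rho> \<in> cube S"
    have sub: "\<And>i. depset ({..<m} - S) (restrict_fn f S \<rho>) i \<subseteq> ?E i - S"
      by (rule depset_restrict[OF Sm r])
    have "is_local ({..<m} - S) n (restrict_fn f S \<rho>) d"
      unfolding is_local_def
    proof (intro allI impI)
      fix i assume "i < n"
      hence "finite (?E i)" "card (?E i) \<le> d" using Eb by auto
      moreover have "card (depset ({..<m} - S) (restrict_fn f S \<rho>) i) \<le> card (?E i)"
        using sub[of i] calculation(1) by (meson card_mono Diff_subset finite_subset subset_trans)
      ultimately show "card (depset ({..<m} - S) (restrict_fn f S \<rho>) i) \<le> d" by linarith
    qed
    moreover have "non_connected ({..<m} - S) (restrict_fn f S \<rho>) I"
      unfolding non_connected_def
    proof (rule pairwise_mono[OF Ip])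
      fix x y assume "(?E x - S) \<inter> (?E y - S) = {}"
      thus "depset ({..<m} - S) (restrict_fn f S \<rho>) x \<inter> depset ({..<m} - S) (restrict_fn f S \<rho>) y = {}"
        using sub[of x] sub[of y] by blast
    qed simp
    ultimately show "dr_local ({..<m} - S) n (restrict_fn f S \<rho>) d (card I)"
      unfolding dr_local_def using IN by blast
  qed
  show ?thesis
    using Sm cS' cI' dr unfolding a_def by blast
qed

end
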